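(* Let $G$ be a hypo-efficient domination graph having at least one $\gamma$-critical vertex. Then \[(\delta(G)+1)(\gamma(G)-1)+1\leq |V(G)|\leq(\Delta(G)+1)(\gamma(G)-1)+1.\]
   Context: All graphs are finite, simple and undirected. For $v\in V(G)$, $N[v]$ is the closed neighborhood of $v$. A set $D\subseteq V(G)$ is dominating if every vertex of $G$ not in $D$ has a neighbor in $D$; $\gamma(G)$ is the minimum size of a dominating set. A vertex $v$ is $\gamma$-critical if $\gamma(G-v)<\gamma(G)$. A set $D\subseteq V(H)$ is an efficient dominating set (EDS) of $H$ if $|N_H[v]\cap D|=1$ for every $v\in V(H)$. $G$ is a hypo-efficient domination graph if $G$ has no EDS but $G-v$ has at least one EDS for every $v\in V(G)$. $\delta(G)$, $\Delta(G)$ are the minimum and maximum degree. *)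

theory Defs
  imports Main
begin

text \<open>Vertex deletion G - v is (V - {v}, E) (E restricted implicitly by V).\<close>

definition simple_graph :: "'a set \<Rightarrow> ('a \<Rightarrow> 'a \<Rightarrow> bool) \<Rightarrow> bool" where
  "simple_graph V E \<longleftrightarrow> finite V \<and> (\<forall>u v. E u v \<longrightarrow> u \<in> V \<and> v \<in> V)
     \<and> (\<forall>u v. E u v \<longrightarrow> E v u) \<and> (\<forall>v. \<not> E v v)"

definition nbhd :: "'a set \<Rightarrow> ('a \<Rightarrow> 'a \<Rightarrow> bool) \<Rightarrow> 'a \<Rightarrow> 'a set" where
  "nbhd V E v = {u \<in> V. E v u}"

definition closed_nbhd :: "'a set \<Rightarrow> ('a \<Rightarrow> 'a \<Rightarrow> bool) \<Rightarrow> 'a \<Rightarrow> 'a set" where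
  "closed_nbhd V E v = insert v (nbhd V E v)"

definition degree :: "'a set \<Rightarrow> ('a \<Rightarrow> 'a \<Rightarrow> bool) \<Rightarrow> 'a \<Rightarrow> nat" where
  "degree V E v = card (nbhd V E v)"

definition min_degree :: "'a set \<Rightarrow> ('a \<Rightarrow> 'a \<Rightarrow> bool) \<Rightarrow> nat" where
  "min_degree V E = Min (degree V E ` V)"

definition max_degree :: "'a set \<Rightarrow> ('a \<Rightarrow> 'a \<Rightarrow> bool) \<Rightarrow> nat" where
  "max_degree V E = Max (degree V E ` V)"

definition dominating :: "'a set \<Rightarrow> ('a \<Rightarrow> 'a \<Rightarrow> bool) \<Rightarrow> 'a set \<Rightarrow> bool" where
  "dominating V E D \<longleftrightarrow> D \<subseteq> V \<and> (\<forall>v \<in> V - D. \<exists>u \<in> D. E v u)"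

definition domination_number :: "'a set \<Rightarrow> ('a \<Rightarrow> 'a \<Rightarrow> bool) \<Rightarrow> nat" where
  "domination_number V E = (LEAST k. \<exists>D. dominating V E D \<and> card D = k)"

definition gamma_critical :: "'a set \<Rightarrow> ('a \<Rightarrow> 'a \<Rightarrow> bool) \<Rightarrow> 'a \<Rightarrow> bool" where
  "gamma_critical V E v \<longleftrightarrow> v \<in> V \<and>
     domination_number (V - {v}) E < domination_number V E"

definition efficient_dominating :: "'a set \<Rightarrow> ('a \<Rightarrow> 'a \<Rightarrow> bool) \<Rightarrow> 'a set \<Rightarrow> bool" where
  "efficient_dominating V E D \<longleftrightarrow> D \<subseteq> V \<and> (\<forall>v \<in> V. card (closed_nbhd V E v \<inter> D) = 1)"

definition has_eds :: "'a set \<Rightarrow> ('a \<Rightarrow> 'a \<Rightarrow> bool) \<Rightarrow> bool" where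
  "has_eds V E \<longleftrightarrow> (\<exists>D. efficient_dominating V E D)"

definition hypo_efficient :: "'a set \<Rightarrow> ('a \<Rightarrow> 'a \<Rightarrow> bool) \<Rightarrow> bool" where
  "hypo_efficient V E \<longleftrightarrow> \<not> has_eds V E \<and> (\<forall>v \<in> V. has_eds (V - {v}) E)"

end

theory Submission
  imports Defs
begin

lemma card1_eq: "card A = 1 \<Longrightarrow> x \<in> A \<Longrightarrow> y \<in> A \<Longrightarrow> x = y"
  by (metis card_1_singletonE singletonD)

lemma dom_le: "dominating V E S \<Longrightarrow> domination_number V E \<le> card S"
  unfolding domination_number_def by (rule Least_le) blast

lemma dom_ex: "dominating V E S \<Longrightarrow> \<exists>S'. dominating V E S' \<and> card S' = domination_number V E"
  unfolding domination_number_def by (rule LeastI_ex) blast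

lemma eds_le:
  assumes sym: "\<And>u w. E u w \<Longrightarrow> E w u" and fin: "finite W"
    and D: "efficient_dominating W E D" and S: "dominating W E S"
  shows "card D \<le> card S"
proof -
  have ex: "\<exists>s. s \<in> S \<and> s \<in> closed_nbhd W E d" if "d \<in> D" for d
  proof (cases "d \<in> S")
    case True then show ?thesis by (auto simp: closed_nbhd_def)
  next
    case False
    with that D S obtain s where "s \<in> S" "E d s"
      unfolding dominating_def efficient_dominating_def by blast
    then show ?thesis using S unfolding dominating_def closed_nbhd_def nbhd_def by blast
  qed
  define f where "f d = (SOME s. s \<in> S \<and> s \<in> closed_nbhd W E d)" for d
  have f: "f d \<in> S \<and> f d \<in> closed_nbhd W E d" if "d \<in> D" for d
    unfolding f_def using someI_ex[OF ex[OF that]] .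
  have "inj_on f D"
  proof
    fix d1 d2 assume d: "d1 \<in> D" "d2 \<in> D" "f d1 = f d2"
    let ?s = "f d1"
    have sW: "?s \<in> W" using f[OF d(1)] S unfolding dominating_def by blast
    have DW: "D \<subseteq> W" using D unfolding efficient_dominating_def by blast
    have bk: "d \<in> closed_nbhd W E s" if "s \<in> closed_nbhd W E d" "d \<in> W" for s d
    proof (cases "s = d")
      case True then show ?thesis by (simp add: closed_nbhd_def)
    next
      case False
      then have "E d s" using that(1) unfolding closed_nbhd_def nbhd_def by blast
      then show ?thesis using sym that(2) unfolding closed_nbhd_def nbhd_def by blast
    qed
    have "d1 \<in> closed_nbhd W E ?s" using bk f[OF d(1)] d(1) DW by blast
    moreover have "d2 \<in> closed_nbhd W E ?s" using bk f[OF d(2)] d DW by (metis subsetD)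
    ultimately have "d1 \<in> closed_nbhd W E ?s \<inter> D" "d2 \<in> closed_nbhd W E ?s \<inter> D"
      using d by blast+
    moreover have "card (closed_nbhd W E ?s \<inter> D) = 1"
      using D sW unfolding efficient_dominating_def by blast
    ultimately show "d1 = d2" using card1_eq by metis
  qed
  moreover have "f ` D \<subseteq> S" using f by blast
  moreover have "finite S" using S fin unfolding dominating_def using finite_subset by blast
  ultimately show ?thesis using card_inj_on_le by blast
qed

theorem theorem3p16:
  fixes V :: "'a set" and E :: "'a \<Rightarrow> 'a \<Rightarrow> bool"
  assumes "simple_graph V E"
    and "hypo_efficient V E"
    and "\<exists>v \<in> V. gamma_critical V E v"
  shows "(min_degree V E + 1) * (domination_number V E - 1) + 1 \<le> card V
       \<and> card V \<le> (max_degree V E + 1) * (domination_number V E - 1) + 1"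
proof -
  obtain v where vV: "v \<in> V" and crit: "domination_number (V - {v}) E < domination_number V E"
    using assms(3) unfolding gamma_critical_def by blast
  have fin: "finite V" and inV: "\<And>u w. E u w \<Longrightarrow> u \<in> V \<and> w \<in> V"
    and sym: "\<And>u w. E u w \<Longrightarrow> E w u" and irr: "\<And>w. \<not> E w w"
    using assms(1) unfolding simple_graph_def by blast+
  define W where "W = V - {v}"
  obtain D where D: "efficient_dominating W E D"
    using assms(2) vV unfolding hypo_efficient_def has_eds_def W_def by blast
  have finW: "finite W" using fin W_def by simp
  have DW: "D \<subseteq> W" using D unfolding efficient_dominating_def by blast
  have finD: "finite D" using DW finW finite_subset by blast
  have Ddom: "dominating W E D"
    unfolding dominating_def
  proof (intro conjI ballI)
    show "D \<subseteq> W" by (rule DW)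
    fix u assume u: "u \<in> W - D"
    then have "card (closed_nbhd W E u \<inter> D) = 1" using D unfolding efficient_dominating_def by blast
    then obtain d where "d \<in> closed_nbhd W E u \<inter> D" by (metis card_1_singletonE insertI1)
    then show "\<exists>d\<in>D. E u d" using u unfolding closed_nbhd_def nbhd_def by auto
  qed
  obtain S where S: "dominating W E S" "card S = domination_number W E"
    using dom_ex[OF Ddom] by blast
  have DleW: "card D \<le> domination_number W E"
    using eds_le[OF sym finW D S(1)] S(2) by simp
  have vD: "v \<notin> D" using DW W_def by blast
  have dom2: "dominating V E (insert v D)"
    using Ddom vV unfolding dominating_def W_def by auto
  have g1: "domination_number V E \<le> card D + 1"
    using dom_le[OF dom2] finD vD by simp
  have g: "domination_number V E = card D + 1" using g1 crit DleW W_def by simp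
  have nadj: "\<not> E v d" if "d \<in> D" for d
  proof
    assume "E v d"
    then have "dominating V E D" using Ddom that DW vV unfolding dominating_def W_def by auto
    then have "domination_number V E \<le> card D" by (rule dom_le)
    then show False using g by simp
  qed
  have cn: "closed_nbhd W E d = closed_nbhd V E d" if "d \<in> D" for d
    using nadj[OF that] unfolding closed_nbhd_def nbhd_def W_def by (auto intro: sym)
  have cardN: "card (closed_nbhd W E d) = degree V E d + 1" if "d \<in> D" for d
  proof -
    have "d \<notin> nbhd V E d" using irr unfolding nbhd_def by blast
    moreover have "finite (nbhd V E d)" using fin unfolding nbhd_def by simp
    ultimately show ?thesis using cn[OF that] unfolding closed_nbhd_def degree_def by simp
  qed
  have cover: "W = (\<Union>d\<in>D. closed_nbhd W E d)"
  proof
    show "W \<subseteq> (\<Union>d\<in>D. closed_nbhd W E d)"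
    proof
      fix u assume u: "u \<in> W"
      then have "card (closed_nbhd W E u \<inter> D) = 1" using D unfolding efficient_dominating_def by blast
      then obtain d where d: "d \<in> closed_nbhd W E u \<inter> D" by (metis card_1_singletonE insertI1)
      then have "u \<in> closed_nbhd W E d" using u unfolding closed_nbhd_def nbhd_def by (auto intro: sym)
      then show "u \<in> (\<Union>d\<in>D. closed_nbhd W E d)" using d by blast
    qed
    show "(\<Union>d\<in>D. closed_nbhd W E d) \<subseteq> W"
      using DW unfolding closed_nbhd_def nbhd_def by auto
  qed
  have disj: "\<forall>d1\<in>D. \<forall>d2\<in>D. d1 \<noteq> d2 \<longrightarrow> closed_nbhd W E d1 \<inter> closed_nbhd W E d2 = {}"
  proof (intro ballI impI)
    fix d1 d2 assume d: "d1 \<in> D" "d2 \<in> D" "d1 \<noteq> d2"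
    show "closed_nbhd W E d1 \<inter> closed_nbhd W E d2 = {}"
    proof (rule ccontr)
      assume "closed_nbhd W E d1 \<inter> closed_nbhd W E d2 \<noteq> {}"
      then obtain u where u: "u \<in> closed_nbhd W E d1" "u \<in> closed_nbhd W E d2" by blast
      have uW: "u \<in> W" using u DW d unfolding closed_nbhd_def nbhd_def by auto
      have a1: "d1 \<in> closed_nbhd W E u \<inter> D" "d2 \<in> closed_nbhd W E u \<inter> D"
        using u d DW unfolding closed_nbhd_def nbhd_def by (auto intro: sym)
      have c1: "card (closed_nbhd W E u \<inter> D) = 1"
        using D uW unfolding efficient_dominating_def by blast
      have "d1 = d2" by (rule card1_eq[OF c1 a1])
      then show False using d(3) by simp
    qed
  qed
  have finN: "\<forall>d\<in>D. finite (closed_nbhd W E d)"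
    using finW unfolding closed_nbhd_def nbhd_def by auto
  have cW: "card W = (\<Sum>d\<in>D. degree V E d + 1)"
    using card_UN_disjoint[OF finD finN disj] cover cardN by simp
  have cV: "card V = card W + 1" proof -
    have "card V > 0" using vV fin card_gt_0_iff by blast
    then show ?thesis using W_def vV fin by (simp add: card_Diff_singleton)
  qed
  have fdeg: "finite (degree V E ` V)" using fin by simp
  have lo: "min_degree V E \<le> degree V E d" if "d \<in> D" for d
    unfolding min_degree_def using fdeg that DW W_def by (intro Min_le) auto
  have hi: "degree V E d \<le> max_degree V E" if "d \<in> D" for d
    unfolding max_degree_def using fdeg that DW W_def by (intro Max_ge) auto
  have s1: "(\<Sum>d\<in>D. min_degree V E + 1) \<le> (\<Sum>d\<in>D. degree V E d + 1)"
    using lo by (intro sum_mono) simp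
  have s2: "(\<Sum>d\<in>D. degree V E d + 1) \<le> (\<Sum>d\<in>D. max_degree V E + 1)"
    using hi by (intro sum_mono) simp
  show ?thesis using s1 s2 cW cV g by (simp add: mult.commute)
qed

end
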